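(* For any $\phi\in\mathcal{C}$, $$\delta(\phi)(\omega)=\int_0^1\int_{\mathbb{U}}\phi(u,t,\omega)\,\tilde\mu_\omega(du,dt).$$
   Context: Let $\mathbb{U}$ be a Lusin space and $\nu$ a $\sigma$-finite measure on $(\mathbb{U},\mathcal{B}(\mathbb{U}))$ with $\nu(\mathbb{U})=\infty$. $\Omega$ is the set of integer-valued measures $\omega$ on $\mathbb{U}\times[0,1]$ with $\omega(\{(u,t)\})\le1$ and $\omega(A\times[0,1])<\infty$ whenever $\nu(A)<\infty$; $\mu_\omega:=\omega$; $\mathcal{F}_t:=\sigma\{\mu_\omega(A\times(0,s]):s\le t,A\in\mathcal{B}(\mathbb{U})\}$; $\mathbb{P}$ makes $\mu$ a Poisson random measure with intensity $\pi(du,dt)=\nu(du)dt$; $\tilde\mu_\omega:=\mu_\omega-\pi$. For $(u,t)\in\mathbb{U}\times[0,1]$, $\varepsilon^-_{(u,t)}$ removes a mass: $(\varepsilon^-_{(u,t)}\omega)(A):=\omega(A\cap\{(u,t)\}^c)$. For $\phi\in L^1(\pi\times\mathbb{P})$ the divergence is $\delta(\phi)(\omega):=\int_0^1\int_{\mathbb{U}}\phi(u,t,\varepsilon^-_{(u,t)}\omega)\,\tilde\mu_\omega(du,dt)$. $\mathcal{C}$ is the linear span of processes $\phi(u,t,\omega)=1_{(t_0,t_1]}(t)g(u,\omega)$, where $0\le t_0<t_1\le1$, $g$ is bounded and $\mathcal{B}(\mathbb{U})\times\mathcal{F}_{t_0}$-measurable, and $g(u,\omega)1_{U^c}(u)=0$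 for some $U\in\mathcal{B}(\mathbb{U})$ with $\nu(U)<\infty$. *)

theory Defs
  imports "HOL-Analysis.Analysis"
begin

text \<open>Lusin space: Hausdorff (type class t2_space) and the image of a Polish space under a
continuous bijection; equivalently (Kechris 7.9) the image of a closed subset of the Baire
space nat => nat under a continuous bijection.\<close>
definition lusin :: "'u::topological_space set \<Rightarrow> bool" where
  "lusin S \<longleftrightarrow> (\<exists>(F::(nat \<Rightarrow> nat) set) (f::(nat \<Rightarrow> nat) \<Rightarrow> 'u).
      closed F \<and> continuous_on F f \<and> bij_betw f F S)"

definition UT :: "('u::topological_space \<times> real) measure" where
  "UT = (borel :: 'u measure) \<Otimes>\<^sub>M restrict_space borel {0..1::real}"

definition Omega :: "'u::topological_space measure \<Rightarrow> ('u \<times> real) measure set" where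
  "Omega nu = {\<omega>. sets \<omega> = sets (UT :: ('u \<times> real) measure)
      \<and> (\<forall>A\<in>sets (UT :: ('u \<times> real) measure). emeasure \<omega> A \<in> range of_nat \<union> {\<infinity>})
      \<and> (\<forall>x\<in>space (UT :: ('u \<times> real) measure). emeasure \<omega> {x} \<le> 1)
      \<and> (\<forall>A\<in>sets (borel :: 'u measure). emeasure nu A < \<infinity> \<longrightarrow> emeasure \<omega> (A \<times> {0..1}) < \<infinity>)}"

definition Filt :: "'u::topological_space measure \<Rightarrow> real \<Rightarrow> ('u \<times> real) measure measure" where
  "Filt nu t = sigma (Omega nu)
     {{\<omega> \<in> Omega nu. emeasure \<omega> (A \<times> {0<..s}) \<in> B} | A s B.
        A \<in> sets (borel :: 'u measure) \<and> s \<le> t \<and> B \<in> sets (borel :: ennreal measure)}"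

definition pi_int :: "'u::topological_space measure \<Rightarrow> ('u \<times> real) measure" where
  "pi_int nu = nu \<Otimes>\<^sub>M restrict_space lborel {0..1::real}"

definition eps_minus :: "'a \<Rightarrow> 'a measure \<Rightarrow> 'a measure" where
  "eps_minus x \<omega> = measure_of (space \<omega>) (sets \<omega>) (\<lambda>A. emeasure \<omega> (A - {x}))"

definition comp_integral :: "'u::topological_space measure \<Rightarrow> ('u \<times> real) measure
    \<Rightarrow> ('u \<times> real \<Rightarrow> real) \<Rightarrow> real" where
  "comp_integral nu \<omega> f = (\<integral>x. f x \<partial>\<omega>) - (\<integral>x. f x \<partial>(pi_int nu))"

definition delta :: "'u::topological_space measure
    \<Rightarrow> ('u \<Rightarrow> real \<Rightarrow> ('u \<times> real) measure \<Rightarrow> real) \<Rightarrow> ('u \<times> real) measure \<Rightarrow> real" where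
  "delta nu \<phi> \<omega> = comp_integral nu \<omega> (\<lambda>(u,t). \<phi> u t (eps_minus (u,t) \<omega>))"

definition elementary :: "'u::topological_space measure
    \<Rightarrow> ('u \<Rightarrow> real \<Rightarrow> ('u \<times> real) measure \<Rightarrow> real) \<Rightarrow> bool" where
  "elementary nu \<phi> \<longleftrightarrow> (\<exists>t0 t1 g U. 0 \<le> t0 \<and> t0 < t1 \<and> t1 \<le> 1
      \<and> (\<exists>B. \<forall>u. \<forall>\<omega>\<in>Omega nu. \<bar>g u \<omega>\<bar> \<le> B)
      \<and> (\<lambda>(u,\<omega>). g u \<omega>) \<in> borel_measurable ((borel :: 'u measure) \<Otimes>\<^sub>M Filt nu t0)
      \<and> U \<in> sets (borel :: 'u measure) \<and> emeasure nu U < \<infinity>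
      \<and> (\<forall>u. \<forall>\<omega>\<in>Omega nu. u \<notin> U \<longrightarrow> g u \<omega> = 0)
      \<and> \<phi> = (\<lambda>u t \<omega>. indicator {t0<..t1} t * g u \<omega>))"

inductive_set Cset :: "'u::topological_space measure
    \<Rightarrow> ('u \<Rightarrow> real \<Rightarrow> ('u \<times> real) measure \<Rightarrow> real) set" for nu where
  zero: "(\<lambda>u t \<omega>. 0) \<in> Cset nu"
| add: "elementary nu \<phi> \<Longrightarrow> \<psi> \<in> Cset nu \<Longrightarrow> (\<lambda>u t \<omega>. c * \<phi> u t \<omega> + \<psi> u t \<omega>) \<in> Cset nu"

end

theory Submission imports Defs begin

lemma eps_minus_emeasure:
  assumes S: "space M - {x} \<in> sets M" and A: "A \<in> sets M"
  shows "emeasure (eps_minus x M) A = emeasure M (A - {x})"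
proof -
  let ?D = "density M (indicator (space M - {x}) :: _ \<Rightarrow> ennreal)"
  have emD: "emeasure ?D B = emeasure M (B - {x})" if B: "B \<in> sets M" for B
  proof -
    have "emeasure ?D B = (\<integral>\<^sup>+ y. indicator (space M - {x}) y * indicator B y \<partial>M)"
      using S B by (intro emeasure_density) auto
    also have "\<dots> = (\<integral>\<^sup>+ y. indicator (B - {x}) y \<partial>M)"
      using sets.sets_into_space[OF B]
      by (intro nn_integral_cong) (auto simp: indicator_def)
    also have "\<dots> = emeasure M (B - {x})"
      using S B by (intro nn_integral_indicator) (metis Diff_Int2 sets.Int sets.sets_into_space Int_absorb1 Diff_Int_distrib2 Int_Diff)
    finally show ?thesis .
  qed
  have "eps_minus x M = measure_of (space M) (sets M) (emeasure ?D)"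
    unfolding eps_minus_def
    by (intro measure_of_eq sets.space_closed) (simp add: sets.sigma_sets_eq emD)
  also have "\<dots> = ?D"
    by (metis measure_of_of_measure sets_density space_density)
  finally show ?thesis using A by (simp add: emD)
qed

lemma sets_eps_minus[simp]: "sets (eps_minus x M) = sets M"
  unfolding eps_minus_def by (simp add: sets.sets_measure_of_eq)

lemma space_eps_minus[simp]: "space (eps_minus x M) = space M"
  unfolding eps_minus_def by (simp add: sets.space_measure_of_eq)

lemma space_UT: "space (UT :: ('u::topological_space \<times> real) measure) = UNIV \<times> {0..1}"
  unfolding UT_def by (simp add: space_pair_measure)

lemma singleton_UT:
  assumes "x \<in> space (UT :: ('u::t2_space \<times> real) measure)"
  shows "{x} \<in> sets (UT :: ('u \<times> real) measure)"
proof -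
  obtain u t where x: "x = (u,t)" and t: "t \<in> {0..1}" using assms by (cases x) (auto simp: space_UT)
  have "{t} \<in> sets (restrict_space borel {0..1::real})"
    using t by (subst sets_restrict_space_iff) auto
  then show ?thesis unfolding UT_def x by (intro sets_Pair) auto
qed

lemma Sdiff_UT: "space (UT :: ('u::t2_space \<times> real) measure) - {x} \<in> sets (UT :: ('u \<times> real) measure)"
proof (cases "x \<in> space (UT :: ('u \<times> real) measure)")
  case True then show ?thesis using singleton_UT[OF True] by auto
next
  case False then show ?thesis by auto
qed

lemma eps_minus_Omega:
  fixes nu :: "'u::t2_space measure"
  assumes w: "\<omega> \<in> Omega nu"
  shows "eps_minus x \<omega> \<in> Omega nu"
proof -
  have sw: "sets \<omega> = sets (UT :: ('u \<times> real) measure)" using w by (simp add: Omega_def)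
  have spw: "space \<omega> = space (UT :: ('u \<times> real) measure)" using sets_eq_imp_space_eq[OF sw] .
  have S: "space \<omega> - {x} \<in> sets \<omega>" using sw spw Sdiff_UT by metis
  have em: "emeasure (eps_minus x \<omega>) A = emeasure \<omega> (A - {x})" if "A \<in> sets \<omega>" for A
    using eps_minus_emeasure[OF S that] .
  have D: "A - {x} \<in> sets \<omega>" if "A \<in> sets \<omega>" for A
    using S that by (metis Diff_Int2 Diff_Int_distrib2 Int_absorb1 sets.Int sets.sets_into_space)
  show ?thesis unfolding Omega_def
  proof (intro CollectI conjI ballI impI)
    show "sets (eps_minus x \<omega>) = sets (UT :: ('u \<times> real) measure)" using sw by simp
  next
    fix A :: "('u \<times> real) set" assume A: "A \<in> sets (UT :: ('u \<times> real) measure)"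
    then show "emeasure (eps_minus x \<omega>) A \<in> range of_nat \<union> {\<infinity>}"
      using em D w sw unfolding Omega_def by auto
  next
    fix y assume y: "y \<in> space (UT :: ('u \<times> real) measure)"
    have Y: "{y} \<in> sets \<omega>" using singleton_UT[OF y] sw by simp
    have "emeasure (eps_minus x \<omega>) {y} = emeasure \<omega> ({y} - {x})" using em Y by simp
    also have "\<dots> \<le> emeasure \<omega> {y}" by (intro emeasure_mono) (use Y in auto)
    also have "\<dots> \<le> 1" using w y unfolding Omega_def by auto
    finally show "emeasure (eps_minus x \<omega>) {y} \<le> 1" .
  next
    fix A :: "'u set" assume A: "A \<in> sets borel" and f: "emeasure nu A < \<infinity>"
    show "emeasure (eps_minus x \<omega>) (A \<times> {0..1}) < \<infinity>"
    proof (cases "A \<times> {0..1} \<in> sets \<omega>")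
      case True
      have "emeasure (eps_minus x \<omega>) (A \<times> {0..1}) = emeasure \<omega> (A \<times> {0..1} - {x})" using em True by simp
      also have "\<dots> \<le> emeasure \<omega> (A \<times> {0..1})" by (intro emeasure_mono) (use True in auto)
      also have "\<dots> < \<infinity>" using w A f unfolding Omega_def by auto
      finally show ?thesis .
    next
      case False then show ?thesis by (simp add: emeasure_notin_sets)
    qed
  qed
qed

lemma sigma_sets_agree:
  assumes "S \<in> sigma_sets \<Omega> G" "a \<in> \<Omega>" "b \<in> \<Omega>" "\<And>T. T \<in> G \<Longrightarrow> (a \<in> T \<longleftrightarrow> b \<in> T)"
  shows "a \<in> S \<longleftrightarrow> b \<in> S"
  using assms(1) by induction (use assms(2-4) in auto)


lemma elem_inv:
  fixes nu :: "'u::t2_space measure"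
  assumes e: "elementary nu \<phi>" and w: "\<omega> \<in> Omega nu"
  shows "\<phi> u t (eps_minus (u,t) \<omega>) = \<phi> u t \<omega>"
proof -
  obtain t0 t1 g U where t01: "0 \<le> t0" "t0 < t1"
    and gm: "(\<lambda>(u,\<omega>). g u \<omega>) \<in> borel_measurable ((borel :: 'u measure) \<Otimes>\<^sub>M Filt nu t0)"
    and ph: "\<phi> = (\<lambda>u t \<omega>. indicator {t0<..t1} t * g u \<omega>)"
    using e unfolding elementary_def by blast
  show ?thesis
  proof (cases "t \<in> {t0<..t1}")
    case False then show ?thesis by (simp add: ph)
  next
    case True
    let ?G = "{{\<omega> \<in> Omega nu. emeasure \<omega> (A \<times> {0<..s}) \<in> B} | A s B.
        A \<in> sets (borel :: 'u measure) \<and> s \<le> t0 \<and> B \<in> sets (borel :: ennreal measure)}"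
    have Gsub: "?G \<subseteq> Pow (Omega nu)" by auto
    have sF: "sets (Filt nu t0) = sigma_sets (Omega nu) ?G"
      unfolding Filt_def using Gsub by (simp add: sets_measure_of)
    have spF: "space (Filt nu t0) = Omega nu"
      unfolding Filt_def using Gsub by (simp add: space_measure_of)
    have gum: "(\<lambda>y. g u y) \<in> borel_measurable (Filt nu t0)"
      using measurable_Pair2[OF gm, of u] by simp
    let ?w' = "eps_minus (u,t) \<omega>"
    have w': "?w' \<in> Omega nu" by (rule eps_minus_Omega[OF w])
    have sw: "sets \<omega> = sets (UT :: ('u \<times> real) measure)" using w by (simp add: Omega_def)
    have spw: "space \<omega> = space (UT :: ('u \<times> real) measure)" using sets_eq_imp_space_eq[OF sw] .
    have S: "space \<omega> - {(u,t)} \<in> sets \<omega>" using sw spw Sdiff_UT by metis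
    have eqgen: "emeasure ?w' (A \<times> {0<..s}) = emeasure \<omega> (A \<times> {0<..s})" if "s \<le> t0" for A s
    proof (cases "A \<times> {0<..s} \<in> sets \<omega>")
      case True
      have "A \<times> {0<..s} - {(u,t)} = A \<times> {0<..s}" using that \<open>t \<in> {t0<..t1}\<close> by auto
      then show ?thesis using eps_minus_emeasure[OF S True] by simp
    next
      case False then show ?thesis by (simp add: emeasure_notin_sets)
    qed
    have agree: "?w' \<in> T \<longleftrightarrow> \<omega> \<in> T" if "T \<in> ?G" for T
      using that w w' eqgen by auto
    have pre: "(\<lambda>y. g u y) -` {g u \<omega>} \<inter> space (Filt nu t0) \<in> sets (Filt nu t0)"
      using gum by (rule measurable_sets) simp
    have "?w' \<in> (\<lambda>y. g u y) -` {g u \<omega>} \<inter> Omega nu"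
      using sigma_sets_agree[OF pre[unfolded sF spF] w' w agree] w by simp
    then show ?thesis by (simp add: ph)
  qed
qed

theorem lemma3p1:
  fixes nu :: "'u::t2_space measure"
    and \<phi> :: "'u \<Rightarrow> real \<Rightarrow> ('u \<times> real) measure \<Rightarrow> real"
    and \<omega> :: "('u \<times> real) measure"
  assumes "lusin (UNIV :: 'u set)"
    and "sets nu = sets (borel :: 'u measure)"
    and "sigma_finite_measure nu"
    and "emeasure nu (space nu) = \<infinity>"
    and "\<phi> \<in> Cset nu"
    and "\<omega> \<in> Omega nu"
  shows "delta nu \<phi> \<omega> = comp_integral nu \<omega> (\<lambda>(u,t). \<phi> u t \<omega>)"
proof -
  have "\<phi> u t (eps_minus (u,t) \<omega>) = \<phi> u t \<omega>" for u t
    using assms(5)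
  proof induction
    case zero then show ?case by simp
  next
    case (add \<phi> \<psi> c) then show ?case using elem_inv[OF add(1) assms(6)] by simp
  qed
  then show ?thesis unfolding delta_def by simp
qed

end
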